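(* Let $d,L$ be positive integers and let $w,v$ be type sequences having the same number of occurrences of `$+$' and the same number of occurrences of `$-$'. There is a bijection $\Psi_{w,v}$ from skew $(d,L)$-cylindric row-strict $w$-oscillating tableaux to skew $(d,L)$-cylindric row-strict $v$-oscillating tableaux that preserves inner shape, outer shape, $\mathrm{wt}^+$ and $\mathrm{wt}^-$, and commutes with reversal: $\Psi_{w^*,v^*}(T^{\mathrm{rev}})=\Psi_{w,v}(T)^{\mathrm{rev}}$ for all such $T$, where $u^*$ denotes $u$ reversed with `$+$' and `$-$' interchanged.
   Context: A $d$-staircase is an integer sequence $\lambda=(\lambda_1\ge\cdots\ge\lambda_d)$ (entries may be negative), $|\lambda|=\sum\lambda_i$; it is a $(d,L)$-staircase if $\lambda_1-\lambda_d\le L$. For $d$-staircases, $\lambda\prec'_{(d,L)}\mu$ means both are $(d,L)$-staircases and $\mu_i-\lambda_i\in\{0,1\}$ for all $1\le i\le d$. For $w=w_1\cdots w_k$, a skew $(d,L)$-cylindric row-strict $w$-oscillating tableau is a sequence of $d$-staircases $T=(\lambda^{(0)},\ldots,\lambda^{(k)})$ with $\lambda^{(i-1)}\prec'_{(d,L)}\lambda^{(i)}$ if $w_i=+$ and $\lambda^{(i)}\prec'_{(d,L)}\lambda^{(i-1)}$ if $w_i=-$. Its inner shape is $\lambda^{(0)}$, outer shape $\lambda^{(k)}$; $\mathrm{wt}^+(T)_i=|\lambda^{(a_i)}|-|\lambda^{(a_i-1)}|$ with $a_i$ the index of the $i$-th `$+$' in $w$; $\mathrm{wt}^-(T)_i=|\lambda^{(b_i-1)}|-|\lambda^{(b_i)}|$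 with $b_i$ the index of the $i$-th-to-last `$-$' in $w$. The reversal $T^{\mathrm{rev}}=(\lambda^{(k)},\ldots,\lambda^{(0)})$ is such a tableau of type $w^*$. *)

theory Defs
  imports Main
begin

text \<open>A d-staircase is a weakly decreasing integer list of length d.
  Type words are bool lists: True = '+', False = '-'.
  A tableau (lambda^(0),...,lambda^(k)) is a list of length k+1.\<close>

definition staircase :: "nat \<Rightarrow> int list \<Rightarrow> bool" where
  "staircase d lam \<longleftrightarrow> length lam = d \<and> sorted_wrt (\<ge>) lam"

definition dL_staircase :: "nat \<Rightarrow> nat \<Rightarrow> int list \<Rightarrow> bool" where
  "dL_staircase d L lam \<longleftrightarrow> staircase d lam \<and> lam ! 0 - lam ! (d - 1) \<le> int L"

definition prec_dL :: "nat \<Rightarrow> nat \<Rightarrow> int list \<Rightarrow> int list \<Rightarrow> bool" where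
  "prec_dL d L lam mu \<longleftrightarrow> dL_staircase d L lam \<and> dL_staircase d L mu \<and>
     (\<forall>i<d. mu ! i - lam ! i \<in> {0, 1})"

definition cyl_tableau :: "nat \<Rightarrow> nat \<Rightarrow> bool list \<Rightarrow> int list list \<Rightarrow> bool" where
  "cyl_tableau d L w T \<longleftrightarrow> length T = length w + 1 \<and> (\<forall>lam\<in>set T. staircase d lam) \<and>
     (\<forall>i<length w. if w ! i then prec_dL d L (T ! i) (T ! Suc i)
                               else prec_dL d L (T ! Suc i) (T ! i))"

definition tableaux :: "nat \<Rightarrow> nat \<Rightarrow> bool list \<Rightarrow> int list list set" where
  "tableaux d L w = {T. cyl_tableau d L w T}"

definition wt_plus :: "bool list \<Rightarrow> int list list \<Rightarrow> int list" where
  "wt_plus w T = [sum_list (T ! Suc j) - sum_list (T ! j). j \<leftarrow> [0..<length w], w ! j]"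

text \<open>wt^-: the i-th entry comes from the i-th-to-last '-' letter of w.\<close>
definition wt_minus :: "bool list \<Rightarrow> int list list \<Rightarrow> int list" where
  "wt_minus w T = rev [sum_list (T ! j) - sum_list (T ! Suc j). j \<leftarrow> [0..<length w], \<not> w ! j]"

definition word_star :: "bool list \<Rightarrow> bool list" where
  "word_star w = rev (map Not w)"

end

theory Submission
  imports Defs
begin


lemma staircase_nth: "staircase d x \<longleftrightarrow> length x = d \<and> (\<forall>i. Suc i < d \<longrightarrow> x!Suc i \<le> x!i)"
proof -
  have "transp (\<lambda>a b::int. b \<le> a)" by (auto simp: transp_def)
  then show ?thesis unfolding staircase_def
    using sorted_wrt_iff_nth_Suc_transp[of "\<lambda>a b::int. b \<le> a" x] by auto
qed

lemma staircase_mono: "staircase d x \<Longrightarrow> i \<le> j \<Longrightarrow> j < d \<Longrightarrow> x!j \<le> x!i"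
  unfolding staircase_def using sorted_wrt_nth_less[of "\<lambda>a b::int. b \<le> a" x i j]
  by (cases "i = j") auto

definition runR :: "(nat \<Rightarrow> int) \<Rightarrow> nat \<Rightarrow> nat \<Rightarrow> nat set" where
  "runR K d i = {j. j < d \<and> K j = K i}"

definition sig :: "(nat \<Rightarrow> int) \<Rightarrow> nat \<Rightarrow> nat \<Rightarrow> nat" where
  "sig K d i = Min (runR K d i) + Max (runR K d i) - i"

locale antiK =
  fixes K :: "nat \<Rightarrow> int" and d :: nat
  assumes anti: "\<And>i j. i \<le> j \<Longrightarrow> j < d \<Longrightarrow> K j \<le> K i"
begin

lemma R_fin: "finite (runR K d i)" unfolding runR_def by auto
lemma R_mem: "i < d \<Longrightarrow> i \<in> runR K d i" unfolding runR_def by auto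
lemma R_ne: "i < d \<Longrightarrow> runR K d i \<noteq> {}" using R_mem by auto

lemma Min_le: "i < d \<Longrightarrow> Min (runR K d i) \<le> i" using R_mem R_fin by auto
lemma Max_ge: "i < d \<Longrightarrow> i \<le> Max (runR K d i)" using R_mem R_fin by auto
lemma Max_lt: "i < d \<Longrightarrow> Max (runR K d i) < d"
  using R_fin R_ne Max_in[of "runR K d i"] unfolding runR_def by auto
lemma K_Min: "i < d \<Longrightarrow> K (Min (runR K d i)) = K i"
  using R_fin R_ne Min_in[of "runR K d i"] unfolding runR_def by auto
lemma K_Max: "i < d \<Longrightarrow> K (Max (runR K d i)) = K i"
  using R_fin R_ne Max_in[of "runR K d i"] unfolding runR_def by auto

lemma K_between: "i < d \<Longrightarrow> Min (runR K d i) \<le> j \<Longrightarrow> j \<le> Max (runR K d i) \<Longrightarrow> K j = K i"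
proof -
  assume a: "i < d" "Min (runR K d i) \<le> j" "j \<le> Max (runR K d i)"
  have j: "j < d" using a Max_lt[OF a(1)] by linarith
  have "K j \<le> K (Min (runR K d i))" using anti[OF a(2) j] .
  moreover have "K (Max (runR K d i)) \<le> K j" using anti[OF a(3) Max_lt[OF a(1)]] .
  ultimately show ?thesis using K_Min[OF a(1)] K_Max[OF a(1)] by linarith
qed

lemma R_eq: "i < d \<Longrightarrow> j < d \<Longrightarrow> K j = K i \<Longrightarrow> runR K d j = runR K d i"
  unfolding runR_def by auto

lemma sig_lt: "i < d \<Longrightarrow> sig K d i < d"
proof -
  assume i: "i < d"
  have "Min (runR K d i) \<le> i" "i \<le> Max (runR K d i)" "Max (runR K d i) < d" using Min_le[OF i] Max_ge[OF i] Max_lt[OF i] by auto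
  then show ?thesis unfolding sig_def by linarith
qed

lemma sig_range: "i < d \<Longrightarrow> Min (runR K d i) \<le> sig K d i \<and> sig K d i \<le> Max (runR K d i)"
proof -
  assume i: "i < d"
  have "Min (runR K d i) \<le> i" "i \<le> Max (runR K d i)" using Min_le[OF i] Max_ge[OF i] by auto
  then show ?thesis unfolding sig_def by linarith
qed

lemma K_sig: "i < d \<Longrightarrow> K (sig K d i) = K i"
  using K_between sig_range by auto

lemma sig_sig: "i < d \<Longrightarrow> sig K d (sig K d i) = i"
proof -
  assume i: "i < d"
  have "runR K d (sig K d i) = runR K d i" using R_eq[OF i sig_lt[OF i] K_sig[OF i]] .
  then show ?thesis using Min_le[OF i] Max_ge[OF i] unfolding sig_def by simp
qed

lemma sig_Suc: "Suc i < d \<Longrightarrow> K (Suc i) = K i \<Longrightarrow> sig K d (Suc i) + 1 = sig K d i"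
proof -
  assume a: "Suc i < d" "K (Suc i) = K i"
  have e: "runR K d (Suc i) = runR K d i" using R_eq[of i "Suc i"] a by simp
  have "Suc i \<le> Max (runR K d i)" using Max_ge[of "Suc i"] e a by simp
  then show ?thesis unfolding sig_def e using Min_le[of i] a by simp
qed

lemma sig_bij: "bij_betw (sig K d) {..<d} {..<d}"
  by (rule bij_betw_byWitness[where f'="sig K d"]) (auto simp: sig_sig sig_lt)

end



definition Low :: "nat \<Rightarrow> nat \<Rightarrow> int list \<Rightarrow> int list \<Rightarrow> int list set" where
  "Low d L lam nu = {mu. prec_dL d L mu lam \<and> prec_dL d L mu nu}"
definition Up :: "nat \<Rightarrow> nat \<Rightarrow> int list \<Rightarrow> int list \<Rightarrow> int list set" where
  "Up d L lam nu = {mu. prec_dL d L lam mu \<and> prec_dL d L nu mu}"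

definition GoodMap :: "int list set \<Rightarrow> int list set \<Rightarrow> int \<Rightarrow> (int list \<Rightarrow> int list) \<Rightarrow> bool" where
  "GoodMap A B s g \<longleftrightarrow> bij_betw g A B \<and> (\<forall>mu\<in>A. sum_list (g mu) = s - sum_list mu)"

lemma dL_len: "dL_staircase d L x \<Longrightarrow> length x = d"
  by (simp add: dL_staircase_def staircase_def)

lemma dL_nth: "dL_staircase d L x \<longleftrightarrow> length x = d \<and> (\<forall>i. Suc i < d \<longrightarrow> x!Suc i \<le> x!i) \<and> x!0 - x!(d-1) \<le> int L"
  by (auto simp: dL_staircase_def staircase_nth)

lemma Low_char: "dL_staircase d L lam \<Longrightarrow> dL_staircase d L nu \<Longrightarrow>
  mu \<in> Low d L lam nu \<longleftrightarrow> dL_staircase d L mu \<and>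
    (\<forall>i<d. lam!i - 1 \<le> mu!i \<and> mu!i \<le> lam!i \<and> nu!i - 1 \<le> mu!i \<and> mu!i \<le> nu!i)"
  unfolding Low_def prec_dL_def by force

lemma Up_char: "dL_staircase d L lam \<Longrightarrow> dL_staircase d L nu \<Longrightarrow>
  mu \<in> Up d L lam nu \<longleftrightarrow> dL_staircase d L mu \<and>
    (\<forall>i<d. lam!i \<le> mu!i \<and> mu!i \<le> lam!i + 1 \<and> nu!i \<le> mu!i \<and> mu!i \<le> nu!i + 1)"
  unfolding Up_def prec_dL_def by force

section \<open>Linear case\<close>

definition phiL :: "nat \<Rightarrow> int list \<Rightarrow> int list \<Rightarrow> int list \<Rightarrow> int list" where
  "phiL d lam nu mu = map (\<lambda>i. (lam!i + nu!i) - mu!(sig (\<lambda>i. lam!i + nu!i) d i)) [0..<d]"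

locale lin =
  fixes d L :: nat and lam nu :: "int list"
  assumes d0: "d > 0"
    and dl: "dL_staircase d L lam" and dn: "dL_staircase d L nu"
    and cut: "min (lam!0) (nu!0) - min (lam!(d-1)) (nu!(d-1)) < int L"
begin

definition K where "K i = lam!i + nu!i"
definition s where "s = sig K d"

lemma stl: "staircase d lam" and stn: "staircase d nu" using dl dn by (auto simp: dL_staircase_def)

lemma antiK: "antiK K d"
  by unfold_locales (auto simp: K_def intro!: add_mono staircase_mono[OF stl] staircase_mono[OF stn])

interpretation antiK K d by (rule antiK)

lemma phi_eq: "phiL d lam nu mu = map (\<lambda>i. K i - mu!(s i)) [0..<d]"
  unfolding phiL_def K_def[abs_def] s_def by simp

lemma same_run: "i < d \<Longrightarrow> j < d \<Longrightarrow> K i = K j \<Longrightarrow> lam!i = lam!j \<and> nu!i = nu!j"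
proof -
  assume a: "i < d" "j < d" "K i = K j"
  show ?thesis
  proof (cases "i \<le> j")
    case True
    then show ?thesis using a staircase_mono[OF stl True] staircase_mono[OF stn True] by (auto simp: K_def)
  next
    case False
    then have ji: "j \<le> i" by simp
    show ?thesis using a staircase_mono[OF stl ji] staircase_mono[OF stn ji] by (auto simp: K_def)
  qed
qed

lemma s_props: "i < d \<Longrightarrow> s i < d \<and> lam!(s i) = lam!i \<and> nu!(s i) = nu!i \<and> K (s i) = K i \<and> s (s i) = i"
  using same_run[of i "s i"] sig_lt K_sig sig_sig unfolding s_def by auto

lemma s_Suc: "Suc i < d \<Longrightarrow> K (Suc i) = K i \<Longrightarrow> s (Suc i) + 1 = s i"
  using sig_Suc unfolding s_def by auto

lemma K_dec: "Suc i < d \<Longrightarrow> K (Suc i) \<noteq> K i \<Longrightarrow> K (Suc i) < K i"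
  using anti[of i "Suc i"] by auto

lemma lam_dec: "Suc i < d \<Longrightarrow> lam!Suc i \<le> lam!i" and nu_dec: "Suc i < d \<Longrightarrow> nu!Suc i \<le> nu!i"
  using stl stn by (auto simp: staircase_nth)

lemma phi_len: "length (phiL d lam nu mu) = d" by (simp add: phi_eq)
lemma phi_nth: "i < d \<Longrightarrow> phiL d lam nu mu ! i = K i - mu!(s i)" by (simp add: phi_eq)

lemma phi_phi: "length mu = d \<Longrightarrow> phiL d lam nu (phiL d lam nu mu) = mu"
  by (rule nth_equalityI) (auto simp: phi_len phi_nth s_props)

lemma phi_Low_Up: assumes m: "mu \<in> Low d L lam nu" shows "phiL d lam nu mu \<in> Up d L lam nu"
proof -
  have mc: "dL_staircase d L mu" and b: "\<And>i. i<d \<Longrightarrow> lam!i - 1 \<le> mu!i \<and> mu!i \<le> lam!i \<and> nu!i - 1 \<le> mu!i \<and> mu!i \<le> nu!i"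
    using m Low_char[OF dl dn] by auto
  have ms: "\<And>i. Suc i < d \<Longrightarrow> mu!Suc i \<le> mu!i" using mc by (auto simp: dL_nth)
  let ?p = "phiL d lam nu mu"
  have pb: "lam!i \<le> ?p!i \<and> ?p!i \<le> lam!i + 1 \<and> nu!i \<le> ?p!i \<and> ?p!i \<le> nu!i + 1" if i: "i < d" for i
    using b[of "s i"] s_props[OF i] i by (auto simp: phi_nth K_def)
  have sorted: "?p!Suc i \<le> ?p!i" if i: "Suc i < d" for i
  proof (cases "K (Suc i) = K i")
    case True
    have "mu!Suc (s (Suc i)) \<le> mu!(s (Suc i))" using ms[of "s (Suc i)"] s_Suc[OF i True] s_props[of i] i by auto
    then show ?thesis using s_Suc[OF i True] True i by (simp add: phi_nth)
  next
    case False
    have "K (Suc i) < K i" using K_dec[OF i False] .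
    then show ?thesis using pb[of i] pb[of "Suc i"] lam_dec[OF i] nu_dec[OF i] i unfolding K_def by linarith
  qed
  have spread: "?p!0 - ?p!(d-1) \<le> int L"
    using pb[of 0] pb[of "d-1"] cut d0 by linarith
  have "dL_staircase d L ?p" using sorted spread by (simp add: dL_nth phi_len)
  then show ?thesis using Up_char[OF dl dn] pb by auto
qed

lemma phi_Up_Low: assumes m: "mu \<in> Up d L lam nu" shows "phiL d lam nu mu \<in> Low d L lam nu"
proof -
  have mc: "dL_staircase d L mu" and b: "\<And>i. i<d \<Longrightarrow> lam!i \<le> mu!i \<and> mu!i \<le> lam!i + 1 \<and> nu!i \<le> mu!i \<and> mu!i \<le> nu!i + 1"
    using m Up_char[OF dl dn] by auto
  have ms: "\<And>i. Suc i < d \<Longrightarrow> mu!Suc i \<le> mu!i" using mc by (auto simp: dL_nth)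
  let ?p = "phiL d lam nu mu"
  have pb: "lam!i - 1 \<le> ?p!i \<and> ?p!i \<le> lam!i \<and> nu!i - 1 \<le> ?p!i \<and> ?p!i \<le> nu!i" if i: "i < d" for i
    using b[of "s i"] s_props[OF i] i by (auto simp: phi_nth K_def)
  have sorted: "?p!Suc i \<le> ?p!i" if i: "Suc i < d" for i
  proof (cases "K (Suc i) = K i")
    case True
    have "mu!Suc (s (Suc i)) \<le> mu!(s (Suc i))" using ms[of "s (Suc i)"] s_Suc[OF i True] s_props[of i] i by auto
    then show ?thesis using s_Suc[OF i True] True i by (simp add: phi_nth)
  next
    case False
    have k: "K (Suc i) < K i" using K_dec[OF i False] .
    show ?thesis
    proof (cases "lam!Suc i < lam!i")
      case True
      then show ?thesis using pb[of i] pb[of "Suc i"] i by linarith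
    next
      case False
      then have "nu!Suc i < nu!i" using k lam_dec[OF i] unfolding K_def by linarith
      then show ?thesis using pb[of i] pb[of "Suc i"] i by linarith
    qed
  qed
  have spread: "?p!0 - ?p!(d-1) \<le> int L"
    using pb[of 0] pb[of "d-1"] cut d0 by linarith
  have "dL_staircase d L ?p" using sorted spread by (simp add: dL_nth phi_len)
  then show ?thesis using Low_char[OF dl dn] pb by auto
qed

lemma phi_sum: assumes "length mu = d"
  shows "sum_list (phiL d lam nu mu) = sum_list lam + sum_list nu - sum_list mu"
proof -
  have l: "length lam = d" "length nu = d" using stl stn by (auto simp: staircase_def)
  have "sum_list (phiL d lam nu mu) = (\<Sum>i<d. K i - mu!(s i))"
    by (simp add: sum_list_sum_nth phi_len phi_nth atLeast0LessThan)
  also have "\<dots> = (\<Sum>i<d. K i) - (\<Sum>i<d. mu!(s i))" by (simp add: sum_subtractf)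
  also have "(\<Sum>i<d. mu!(s i)) = (\<Sum>i<d. mu!i)"
    using sum.reindex_bij_betw[OF sig_bij, of "\<lambda>i. mu!i"] unfolding s_def by simp
  also have "(\<Sum>i<d. K i) = sum_list lam + sum_list nu"
    by (simp add: K_def sum.distrib sum_list_sum_nth l atLeast0LessThan)
  finally show ?thesis using assms by (simp add: sum_list_sum_nth atLeast0LessThan)
qed

lemma linear_good: "\<exists>g. GoodMap (Low d L lam nu) (Up d L lam nu) (sum_list lam + sum_list nu) g"
proof -
  have lenL: "\<And>mu. mu \<in> Low d L lam nu \<Longrightarrow> length mu = d" and lenU: "\<And>mu. mu \<in> Up d L lam nu \<Longrightarrow> length mu = d"
    using Low_char[OF dl dn] Up_char[OF dl dn] dL_len by blast+
  have "bij_betw (phiL d lam nu) (Low d L lam nu) (Up d L lam nu)"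
    by (rule bij_betw_byWitness[where f'="phiL d lam nu"])
       (auto simp: phi_phi lenL lenU phi_Low_Up phi_Up_Low)
  then show ?thesis unfolding GoodMap_def using phi_sum lenL by blast
qed

end



definition rot :: "nat \<Rightarrow> int list \<Rightarrow> int list" where
  "rot L x = tl x @ [hd x - int L]"
definition unrot :: "nat \<Rightarrow> int list \<Rightarrow> int list" where
  "unrot L x = (last x + int L) # butlast x"

lemma rot_len[simp]: "x \<noteq> [] \<Longrightarrow> length (rot L x) = length x"
  by (simp add: rot_def)
lemma unrot_len[simp]: "x \<noteq> [] \<Longrightarrow> length (unrot L x) = length x"
  by (simp add: unrot_def)
lemma unrot_ne[simp]: "unrot L x \<noteq> []" by (simp add: unrot_def)
lemma rot_nth: "i < length x \<Longrightarrow> rot L x ! i = (if Suc i < length x then x!Suc i else x!0 - int L)"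
  by (cases x) (auto simp: rot_def nth_append)
lemma unrot_rot: "x \<noteq> [] \<Longrightarrow> unrot L (rot L x) = x"
  by (cases x) (auto simp: rot_def unrot_def)
lemma rot_unrot: "x \<noteq> [] \<Longrightarrow> rot L (unrot L x) = x"
  by (auto simp: rot_def unrot_def)
lemma sum_rot: "x \<noteq> [] \<Longrightarrow> sum_list (rot L x) = sum_list x - int L"
  by (cases x) (auto simp: rot_def)

lemma dL_rot: assumes l: "length x = d" and d: "d > 0"
  shows "dL_staircase d L (rot L x) \<longleftrightarrow> dL_staircase d L x"
proof -
  have ne: "x \<noteq> []" using l d by auto
  have rn: "\<And>i. i < d \<Longrightarrow> rot L x ! i = (if Suc i < d then x!Suc i else x!0 - int L)"
    using rot_nth l by auto
  show ?thesis
  proof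
    assume r: "dL_staircase d L (rot L x)"
    have rs: "\<And>i. Suc i < d \<Longrightarrow> rot L x!Suc i \<le> rot L x!i" and rsp: "rot L x!0 - rot L x!(d-1) \<le> int L"
      using r by (auto simp: dL_nth)
    have s: "x!Suc i \<le> x!i" if i: "Suc i < d" for i
    proof (cases i)
      case 0
      then show ?thesis using rsp rn[of 0] rn[of "d-1"] i by (auto split: if_splits)
    next
      case (Suc j)
      then show ?thesis using rs[of j] rn[of j] rn[of "Suc j"] i by auto
    qed
    have sp: "x!0 - x!(d-1) \<le> int L"
    proof (cases "d = 1")
      case True then show ?thesis by simp
    next
      case False
      then show ?thesis using rs[of "d-2"] rn[of "d-2"] rn[of "d-1"] d
        by (auto simp: Suc_diff_Suc numeral_2_eq_2)
    qed
    show "dL_staircase d L x" using s sp l by (simp add: dL_nth)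
  next
    assume r: "dL_staircase d L x"
    have xs: "\<And>i. Suc i < d \<Longrightarrow> x!Suc i \<le> x!i" and xsp: "x!0 - x!(d-1) \<le> int L"
      using r by (auto simp: dL_nth)
    have s: "rot L x!Suc i \<le> rot L x!i" if i: "Suc i < d" for i
    proof (cases "Suc (Suc i) < d")
      case True then show ?thesis using xs[of "Suc i"] rn[of i] rn[of "Suc i"] i by auto
    next
      case False
      then have "d - 1 = Suc i" using i by auto
      then show ?thesis using xsp rn[of i] rn[of "Suc i"] i False by auto
    qed
    have sp: "rot L x!0 - rot L x!(d-1) \<le> int L"
    proof (cases "d = 1")
      case True then show ?thesis using rn[of 0] by simp
    next
      case False
      then show ?thesis using xs[of 0] rn[of 0] rn[of "d-1"] d by auto
    qed
    show "dL_staircase d L (rot L x)" using s sp l ne by (simp add: dL_nth)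
  qed
qed

lemma prec_rot: assumes la: "length a = d" and lb: "length b = d" and d: "d > 0"
  shows "prec_dL d L (rot L a) (rot L b) \<longleftrightarrow> prec_dL d L a b"
proof -
  have c: "(\<forall>i<d. rot L b ! i - rot L a ! i \<in> {0, 1}) \<longleftrightarrow> (\<forall>i<d. b ! i - a ! i \<in> {0, 1})"
  proof
    assume h: "\<forall>i<d. rot L b ! i - rot L a ! i \<in> {0, 1}"
    show "\<forall>i<d. b ! i - a ! i \<in> {0, 1}"
    proof (intro allI impI)
      fix i assume i: "i < d"
      show "b ! i - a ! i \<in> {0, 1}"
      proof (cases i)
        case 0
        then show ?thesis using h[rule_format, of "d-1"] rot_nth[of "d-1" a L] rot_nth[of "d-1" b L] la lb d by auto
      next
        case (Suc j)
        then show ?thesis using h[rule_format, of j] rot_nth[of j a L] rot_nth[of j b L] la lb i by auto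
      qed
    qed
  next
    assume h: "\<forall>i<d. b ! i - a ! i \<in> {0, 1}"
    show "\<forall>i<d. rot L b ! i - rot L a ! i \<in> {0, 1}"
    proof (intro allI impI)
      fix i assume i: "i < d"
      show "rot L b ! i - rot L a ! i \<in> {0, 1}"
        using h[rule_format, of "Suc i"] h[rule_format, of 0] rot_nth[of i a L] rot_nth[of i b L] la lb i d by auto
    qed
  qed
  show ?thesis unfolding prec_dL_def using c dL_rot[OF la d] dL_rot[OF lb d] by simp
qed

lemma good_rot:
  assumes d: "d > 0" and ll: "length lam = d" and ln: "length nu = d"
    and g: "\<exists>g. GoodMap (Low d L (rot L lam) (rot L nu)) (Up d L (rot L lam) (rot L nu)) (sum_list (rot L lam) + sum_list (rot L nu)) g"
  shows "\<exists>g. GoodMap (Low d L lam nu) (Up d L lam nu) (sum_list lam + sum_list nu) g"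
proof -
  obtain g where g: "GoodMap (Low d L (rot L lam) (rot L nu)) (Up d L (rot L lam) (rot L nu)) (sum_list (rot L lam) + sum_list (rot L nu)) g"
    using g by blast
  have pl: "\<And>a b. prec_dL d L a b \<Longrightarrow> length a = d \<and> length b = d"
    unfolding prec_dL_def using dL_len by blast
  have ne: "\<And>a. length a = d \<Longrightarrow> a \<noteq> []" using d by auto
  have b1: "bij_betw (rot L) (Low d L lam nu) (Low d L (rot L lam) (rot L nu))"
  proof (rule bij_betw_byWitness[where f'="unrot L"])
    show "\<forall>a\<in>Low d L lam nu. unrot L (rot L a) = a" using pl ne unrot_rot unfolding Low_def by blast
    show "\<forall>a'\<in>Low d L (rot L lam) (rot L nu). rot L (unrot L a') = a'" using pl ne rot_unrot unfolding Low_def by blast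
    show "rot L ` Low d L lam nu \<subseteq> Low d L (rot L lam) (rot L nu)"
      using pl prec_rot[OF _ _ d] unfolding Low_def by blast
    show "unrot L ` Low d L (rot L lam) (rot L nu) \<subseteq> Low d L lam nu"
    proof
      fix y assume "y \<in> unrot L ` Low d L (rot L lam) (rot L nu)"
      then obtain x where x: "x \<in> Low d L (rot L lam) (rot L nu)" and y: "y = unrot L x" by blast
      have lx: "length x = d" using x pl unfolding Low_def by blast
      have ly: "length y = d" using lx ne[OF lx] y by simp
      have "x = rot L y" using rot_unrot[OF ne[OF lx]] y by simp
      then show "y \<in> Low d L lam nu" using x prec_rot[OF ly ll d] prec_rot[OF ly ln d] unfolding Low_def by simp
    qed
  qed
  have b3: "bij_betw (unrot L) (Up d L (rot L lam) (rot L nu)) (Up d L lam nu)"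
  proof (rule bij_betw_byWitness[where f'="rot L"])
    show "\<forall>a'\<in>Up d L lam nu. unrot L (rot L a') = a'" using pl ne unrot_rot unfolding Up_def by blast
    show "\<forall>a\<in>Up d L (rot L lam) (rot L nu). rot L (unrot L a) = a" using pl ne rot_unrot unfolding Up_def by blast
    show "rot L ` Up d L lam nu \<subseteq> Up d L (rot L lam) (rot L nu)"
      using pl prec_rot[OF _ _ d] unfolding Up_def by blast
    show "unrot L ` Up d L (rot L lam) (rot L nu) \<subseteq> Up d L lam nu"
    proof
      fix y assume "y \<in> unrot L ` Up d L (rot L lam) (rot L nu)"
      then obtain x where x: "x \<in> Up d L (rot L lam) (rot L nu)" and y: "y = unrot L x" by blast
      have lx: "length x = d" using x pl unfolding Up_def by blast
      have ly: "length y = d" using lx ne[OF lx] y by simp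
      have "x = rot L y" using rot_unrot[OF ne[OF lx]] y by simp
      then show "y \<in> Up d L lam nu" using x prec_rot[OF ll ly d] prec_rot[OF ln ly d] unfolding Up_def by simp
    qed
  qed
  have bg: "bij_betw g (Low d L (rot L lam) (rot L nu)) (Up d L (rot L lam) (rot L nu))"
    using g unfolding GoodMap_def by blast
  have B: "bij_betw (unrot L \<circ> g \<circ> rot L) (Low d L lam nu) (Up d L lam nu)"
    using bij_betw_trans[OF bij_betw_trans[OF b1 bg] b3] by (simp add: comp_assoc)
  have S: "sum_list ((unrot L \<circ> g \<circ> rot L) mu) = sum_list lam + sum_list nu - sum_list mu"
    if mu: "mu \<in> Low d L lam nu" for mu
  proof -
    have rm: "rot L mu \<in> Low d L (rot L lam) (rot L nu)" using b1 mu bij_betwE by blast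
    have gm: "g (rot L mu) \<in> Up d L (rot L lam) (rot L nu)" using bg rm bij_betwE by blast
    have lg: "length (g (rot L mu)) = d" using gm pl unfolding Up_def by blast
    have lm: "length mu = d" using mu pl unfolding Low_def by blast
    have "sum_list (g (rot L mu)) = sum_list (rot L lam) + sum_list (rot L nu) - sum_list (rot L mu)"
      using g rm unfolding GoodMap_def by blast
    moreover have "sum_list (g (rot L mu)) = sum_list (unrot L (g (rot L mu))) - int L"
      using sum_rot[of "unrot L (g (rot L mu))" L] rot_unrot[of "g (rot L mu)" L] ne[OF lg] by simp
    moreover have "sum_list (rot L lam) = sum_list lam - int L" "sum_list (rot L nu) = sum_list nu - int L"
      "sum_list (rot L mu) = sum_list mu - int L"
      using sum_rot[OF ne[OF ll]] sum_rot[OF ne[OF ln]] sum_rot[OF ne[OF lm]] by auto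
    ultimately show ?thesis by simp
  qed
  show ?thesis using B S unfolding GoodMap_def by blast
qed

lemma rk_len: "x \<noteq> [] \<Longrightarrow> length ((rot L ^^ k) x) = length x"
proof (induction k)
  case 0 then show ?case by simp
next
  case (Suc k)
  then have "(rot L ^^ k) x \<noteq> []" by auto
  then show ?case using Suc by simp
qed

lemma rk_nth: "k \<le> length x \<Longrightarrow> i < length x \<Longrightarrow>
  (rot L ^^ k) x ! i = (if i + k < length x then x!(i+k) else x!(i+k-length x) - int L)"
proof (induction k arbitrary: i)
  case 0 then show ?case by simp
next
  case (Suc k)
  have ne: "x \<noteq> []" using Suc by auto
  have l: "length ((rot L ^^ k) x) = length x" using rk_len[OF ne] .
  have "(rot L ^^ Suc k) x ! i = rot L ((rot L ^^ k) x) ! i" by simp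
  also have "\<dots> = (if Suc i < length x then (rot L ^^ k) x ! Suc i else (rot L ^^ k) x ! 0 - int L)"
    using rot_nth[of i "(rot L ^^ k) x" L] l Suc.prems by simp
  also have "\<dots> = (if i + Suc k < length x then x!(i + Suc k) else x!(i + Suc k - length x) - int L)"
  proof (cases "Suc i < length x")
    case True
    then show ?thesis using Suc.IH[of "Suc i"] Suc.prems by simp
  next
    case False
    then have i: "i = length x - 1" using Suc.prems by simp
    have "(rot L ^^ k) x ! 0 = x!k" using Suc.IH[of 0] Suc.prems ne by simp
    moreover have "\<not> i + Suc k < length x" "i + Suc k - length x = k" using i Suc.prems by auto
    ultimately show ?thesis using False by simp
  qed
  finally show ?case .
qed

lemma dL_rk: "length x = d \<Longrightarrow> d > 0 \<Longrightarrow> dL_staircase d L x \<Longrightarrow> dL_staircase d L ((rot L ^^ k) x)"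
proof (induction k)
  case 0 then show ?case by simp
next
  case (Suc k)
  have "length ((rot L ^^ k) x) = d" using rk_len[of x k L] Suc.prems by auto
  then show ?case using dL_rot[of "(rot L ^^ k) x" d L] Suc by simp
qed

lemma good_rk:
  "d > 0 \<Longrightarrow> length lam = d \<Longrightarrow> length nu = d \<Longrightarrow>
   \<exists>g. GoodMap (Low d L ((rot L ^^ k) lam) ((rot L ^^ k) nu)) (Up d L ((rot L ^^ k) lam) ((rot L ^^ k) nu))
      (sum_list ((rot L ^^ k) lam) + sum_list ((rot L ^^ k) nu)) g \<Longrightarrow>
   \<exists>g. GoodMap (Low d L lam nu) (Up d L lam nu) (sum_list lam + sum_list nu) g"
proof (induction k arbitrary: lam nu)
  case 0 then show ?case by simp
next
  case (Suc k)
  have ne: "lam \<noteq> []" "nu \<noteq> []" using Suc.prems by auto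
  have fs: "(rot L ^^ Suc k) x = (rot L ^^ k) (rot L x)" for x by (simp only: funpow_Suc_right comp_def)
  have "\<exists>g. GoodMap (Low d L (rot L lam) (rot L nu)) (Up d L (rot L lam) (rot L nu)) (sum_list (rot L lam) + sum_list (rot L nu)) g"
    apply (rule Suc.IH[of "rot L lam" "rot L nu"])
    using Suc.prems ne by (simp_all del: funpow.simps add: fs)
  then show ?case using good_rot Suc.prems by blast
qed

lemma local_exists:
  assumes d: "d > 0" and L: "L > 0"
  shows "\<exists>g. GoodMap (Low d L lam nu) (Up d L lam nu) (sum_list lam + sum_list nu) g"
proof (cases "dL_staircase d L lam \<and> dL_staircase d L nu")
  case False
  then have "Low d L lam nu = {}" "Up d L lam nu = {}" unfolding Low_def Up_def prec_dL_def by auto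
  then show ?thesis unfolding GoodMap_def by (intro exI[of _ id]) simp
next
  case True
  then have dl: "dL_staircase d L lam" and dn: "dL_staircase d L nu" by auto
  have ll: "length lam = d" and ln: "length nu = d" using dl dn dL_len by auto
  define m where "m j = min (lam!j) (nu!j)" for j
  have ms: "m (Suc j) \<le> m j" if "Suc j < d" for j
    using dl dn that unfolding m_def by (auto simp: dL_nth)
  obtain k where k: "k < d" and cutk: "min (((rot L ^^ k) lam)!0) (((rot L ^^ k) nu)!0)
      - min (((rot L ^^ k) lam)!(d-1)) (((rot L ^^ k) nu)!(d-1)) < int L"
  proof (cases "m 0 - m (d-1) < int L")
    case True
    then show ?thesis using that[of 0] d unfolding m_def by simp
  next
    case False
    have "\<exists>k. 0 < k \<and> k < d \<and> m k < m (k-1)"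
    proof (rule ccontr)
      assume "\<not> ?thesis"
      then have h: "\<And>k. 0 < k \<Longrightarrow> k < d \<Longrightarrow> m (k-1) \<le> m k" by force
      have "j < d \<Longrightarrow> m 0 \<le> m j" for j
      proof (induction j)
        case 0 then show ?case by simp
      next
        case (Suc j) then show ?case using h[of "Suc j"] by simp
      qed
      then have "m 0 \<le> m (d-1)" using d by simp
      then show False using False L by simp
    qed
    then obtain k where k: "0 < k" "k < d" "m k < m (k-1)" by blast
    have e1: "((rot L ^^ k) x)!0 = x!k" if "length x = d" for x
    proof -
      have "((rot L ^^ k) x)!0 = (if 0 + k < length x then x!(0+k) else x!(0+k-length x) - int L)"
        using rk_nth[of k x "0" L] k that by simp
      then show ?thesis using k that by simp
    qed
    have e2: "((rot L ^^ k) x)!(d-1) = x!(k-1) - int L" if "length x = d" for x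
    proof -
      have "((rot L ^^ k) x)!(d-1) = (if d-1 + k < length x then x!(d-1+k) else x!(d-1+k-length x) - int L)"
        using rk_nth[of k x "d-1" L] k that by simp
      moreover have "\<not> d-1+k < d" "d-1+k-d = k-1" using k by auto
      ultimately show ?thesis using that by simp
    qed
    have "min (((rot L ^^ k) lam)!0) (((rot L ^^ k) nu)!0) - min (((rot L ^^ k) lam)!(d-1)) (((rot L ^^ k) nu)!(d-1))
       = m k - m (k-1) + int L"
      unfolding m_def e1[OF ll] e1[OF ln] e2[OF ll] e2[OF ln] by (auto simp: min_def)
    then show ?thesis using that[of k] k(2) k(3) by linarith
  qed
  have nel: "lam \<noteq> []" "nu \<noteq> []" using ll ln d by auto
  have lr: "length ((rot L ^^ k) lam) = d" "length ((rot L ^^ k) nu) = d"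
    using rk_len[OF nel(1), of k L] rk_len[OF nel(2), of k L] ll ln by auto
  interpret lin d L "(rot L ^^ k) lam" "(rot L ^^ k) nu"
    by unfold_locales (use d dL_rk[OF ll d dl] dL_rk[OF ln d dn] cutk in auto)
  show ?thesis using good_rk[OF d ll ln] linear_good by blast
qed



definition loc :: "nat \<Rightarrow> nat \<Rightarrow> int list \<Rightarrow> int list \<Rightarrow> int list \<Rightarrow> int list" where
  "loc d L lam nu = (SOME g. GoodMap (Low d L lam nu) (Up d L lam nu) (sum_list lam + sum_list nu) g)"

definition iloc :: "nat \<Rightarrow> nat \<Rightarrow> int list \<Rightarrow> int list \<Rightarrow> int list \<Rightarrow> int list" where
  "iloc d L lam nu = inv_into (Low d L lam nu) (loc d L lam nu)"

lemma loc_good: "d > 0 \<Longrightarrow> L > 0 \<Longrightarrow> GoodMap (Low d L lam nu) (Up d L lam nu) (sum_list lam + sum_list nu) (loc d L lam nu)"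
  unfolding loc_def using local_exists by (rule someI_ex)

lemma loc_sym: "loc d L lam nu = loc d L nu lam"
proof -
  have "Low d L lam nu = Low d L nu lam" "Up d L lam nu = Up d L nu lam" unfolding Low_def Up_def by auto
  then show ?thesis unfolding loc_def by (simp add: add.commute)
qed

lemma loc_bij: "d > 0 \<Longrightarrow> L > 0 \<Longrightarrow> bij_betw (loc d L lam nu) (Low d L lam nu) (Up d L lam nu)"
  using loc_good unfolding GoodMap_def by blast
lemma loc_Up: "d > 0 \<Longrightarrow> L > 0 \<Longrightarrow> mu \<in> Low d L lam nu \<Longrightarrow> loc d L lam nu mu \<in> Up d L lam nu"
  using bij_betwE[OF loc_bij[of d L lam nu]] by blast
lemma loc_sum: "d > 0 \<Longrightarrow> L > 0 \<Longrightarrow> mu \<in> Low d L lam nu \<Longrightarrow>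
   sum_list (loc d L lam nu mu) = sum_list lam + sum_list nu - sum_list mu"
  using loc_good unfolding GoodMap_def by blast
lemma iloc_Low: "d > 0 \<Longrightarrow> L > 0 \<Longrightarrow> mu \<in> Up d L lam nu \<Longrightarrow> iloc d L lam nu mu \<in> Low d L lam nu"
  unfolding iloc_def using bij_betwE[OF bij_betw_inv_into[OF loc_bij[of d L lam nu]]] by blast
lemma iloc_loc: "d > 0 \<Longrightarrow> L > 0 \<Longrightarrow> mu \<in> Low d L lam nu \<Longrightarrow> iloc d L lam nu (loc d L lam nu mu) = mu"
  unfolding iloc_def using bij_betw_inv_into_left[OF loc_bij[of d L lam nu]] by blast
lemma loc_iloc: "d > 0 \<Longrightarrow> L > 0 \<Longrightarrow> mu \<in> Up d L lam nu \<Longrightarrow> loc d L lam nu (iloc d L lam nu mu) = mu"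
  unfolding iloc_def using bij_betw_inv_into_right[OF loc_bij[of d L lam nu]] by blast

section \<open>Parallel swaps\<close>

fun psw :: "('a \<Rightarrow> bool) \<Rightarrow> 'a list \<Rightarrow> 'a list" where
  "psw P (x # y # r) = (if \<not> P x \<and> P y then y # x # psw P r else x # psw P (y # r))"
| "psw P xs = xs"

lemma psw_len[simp]: "length (psw P xs) = length xs"
  by (induction P xs rule: psw.induct) auto

lemma psw_filter: "filter P (psw P xs) = filter P xs"
  by (induction P xs rule: psw.induct) auto
lemma psw_filter_not: "filter (\<lambda>x. \<not> P x) (psw P xs) = filter (\<lambda>x. \<not> P x) xs"
  by (induction P xs rule: psw.induct) auto
lemma psw_count: "count_list (psw P xs) a = count_list xs a"
  by (induction P xs rule: psw.induct) auto

lemma psw_nth: "j < length xs \<Longrightarrow> psw P xs ! j =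
  (if Suc j < length xs \<and> \<not> P (xs!j) \<and> P (xs!Suc j) then xs!Suc j
   else if 0 < j \<and> \<not> P (xs!(j-1)) \<and> P (xs!j) then xs!(j-1) else xs!j)"
proof (induction P xs arbitrary: j rule: psw.induct)
  case (1 P x y r)
  show ?case
  proof (cases "\<not> P x \<and> P y")
    case True
    then have e: "psw P (x # y # r) = y # x # psw P r" by simp
    show ?thesis
    proof (cases j)
      case 0 then show ?thesis using True e by simp
    next
      case (Suc j1)
      show ?thesis
      proof (cases j1)
        case 0 then show ?thesis using True e Suc by simp
      next
        case (Suc j2)
        have j2: "j2 < length r" using "1.prems" Suc \<open>j = Suc j1\<close> by simp
        have "psw P (x # y # r) ! j = psw P r ! j2" using e Suc \<open>j = Suc j1\<close> by simp
        also have "\<dots> = (if Suc j2 < length r \<and> \<not> P (r!j2) \<and> P (r!Suc j2) then r!Suc j2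
            else if 0 < j2 \<and> \<not> P (r!(j2-1)) \<and> P (r!j2) then r!(j2-1) else r!j2)"
          using "1.IH"(1)[OF True j2] .
        finally show ?thesis using Suc \<open>j = Suc j1\<close> True by (cases j2) auto
      qed
    qed
  next
    case False
    then have e: "psw P (x # y # r) = x # psw P (y # r)" by (simp only: psw.simps(1) if_not_P[OF False] if_False)
    show ?thesis
    proof (cases j)
      case 0
      have "psw P (x # y # r) ! 0 = x" using e by simp
      then show ?thesis using False 0 by auto
    next
      case (Suc j1)
      have j1: "j1 < length (y # r)" using "1.prems" Suc by simp
      have "psw P (x # y # r) ! j = psw P (y # r) ! j1" using e Suc by simp
      also have "\<dots> = (if Suc j1 < length (y # r) \<and> \<not> P ((y # r)!j1) \<and> P ((y # r)!Suc j1) then (y # r)!Suc j1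
            else if 0 < j1 \<and> \<not> P ((y # r)!(j1-1)) \<and> P ((y # r)!j1) then (y # r)!(j1-1) else (y # r)!j1)"
        using "1.IH"(2)[OF False j1] .
      finally show ?thesis using Suc False by (cases j1) auto
    qed
  qed
next
  case ("2_1" P)
  then show ?case by simp
next
  case ("2_2" P v)
  then show ?case by simp
qed

definition sw :: "bool list \<Rightarrow> bool list" where "sw w = psw (\<lambda>b. b) w"

lemma sw_len[simp]: "length (sw w) = length w" by (simp add: sw_def)
lemma sw_count: "count_list (sw w) a = count_list w a" by (simp add: sw_def psw_count)
lemma sw_nth: "j < length w \<Longrightarrow> sw w ! j =
  (if Suc j < length w \<and> \<not> w!j \<and> w!Suc j then True
   else if 0 < j \<and> \<not> w!(j-1) \<and> w!j then False else w!j)"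
  unfolding sw_def using psw_nth[of j w "\<lambda>b. b"] by auto

definition mid :: "bool list \<Rightarrow> nat \<Rightarrow> bool" where
  "mid w j \<longleftrightarrow> 0 < j \<and> j < length w \<and> \<not> w!(j-1) \<and> w!j"

definition st :: "nat \<Rightarrow> nat \<Rightarrow> bool list \<Rightarrow> int list list \<Rightarrow> int list list" where
  "st d L w T = map (\<lambda>j. if mid w j then loc d L (T!(j-1)) (T!Suc j) (T!j) else T!j) [0..<length T]"
definition ist :: "nat \<Rightarrow> nat \<Rightarrow> bool list \<Rightarrow> int list list \<Rightarrow> int list list" where
  "ist d L w T = map (\<lambda>j. if mid w j then iloc d L (T!(j-1)) (T!Suc j) (T!j) else T!j) [0..<length T]"

lemma st_len[simp]: "length (st d L w T) = length T" by (simp add: st_def)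
lemma ist_len[simp]: "length (ist d L w T) = length T" by (simp add: ist_def)
lemma st_nth: "j < length T \<Longrightarrow> st d L w T ! j = (if mid w j then loc d L (T!(j-1)) (T!Suc j) (T!j) else T!j)"
  by (simp add: st_def)
lemma ist_nth: "j < length T \<Longrightarrow> ist d L w T ! j = (if mid w j then iloc d L (T!(j-1)) (T!Suc j) (T!j) else T!j)"
  by (simp add: ist_def)

lemma tab_rel: "T \<in> tableaux d L w \<Longrightarrow> i < length w \<Longrightarrow>
   (if w!i then prec_dL d L (T!i) (T!Suc i) else prec_dL d L (T!Suc i) (T!i))"
  unfolding tableaux_def cyl_tableau_def by blast
lemma tab_len: "T \<in> tableaux d L w \<Longrightarrow> length T = length w + 1"
  unfolding tableaux_def cyl_tableau_def by blast

lemma tab_intro: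
  assumes "length T = length w + 1" "\<And>j. j < length T \<Longrightarrow> staircase d (T!j)"
    "\<And>i. i < length w \<Longrightarrow> (if w!i then prec_dL d L (T!i) (T!Suc i) else prec_dL d L (T!Suc i) (T!i))"
  shows "T \<in> tableaux d L w"
  unfolding tableaux_def cyl_tableau_def using assms by (auto simp: in_set_conv_nth)

lemma tab_stair: "T \<in> tableaux d L w \<Longrightarrow> j < length T \<Longrightarrow> staircase d (T!j)"
  unfolding tableaux_def cyl_tableau_def by auto

lemma prec_stair: "prec_dL d L a b \<Longrightarrow> staircase d a \<and> staircase d b"
  unfolding prec_dL_def dL_staircase_def by auto

lemma mid_Low: assumes T: "T \<in> tableaux d L w" and m: "mid w j"
  shows "T!j \<in> Low d L (T!(j-1)) (T!Suc j)"
proof -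
  have j: "0 < j" "j < length w" "\<not> w!(j-1)" "w!j" using m unfolding mid_def by auto
  have "prec_dL d L (T!j) (T!(j-1))" using tab_rel[OF T, of "j-1"] j by simp
  moreover have "prec_dL d L (T!j) (T!Suc j)" using tab_rel[OF T, of j] j by simp
  ultimately show ?thesis unfolding Low_def by simp
qed

lemma mid_Up: assumes T: "T \<in> tableaux d L (sw w)" and m: "mid w j"
  shows "T!j \<in> Up d L (T!(j-1)) (T!Suc j)"
proof -
  have j: "0 < j" "j < length w" "\<not> w!(j-1)" "w!j" using m unfolding mid_def by auto
  have s1: "sw w ! (j-1) = True" using sw_nth[of "j-1" w] j by simp
  have s2: "sw w ! j = False" using sw_nth[of j w] j by simp
  have "prec_dL d L (T!(j-1)) (T!j)" using tab_rel[OF T, of "j-1"] j s1 by simp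
  moreover have "prec_dL d L (T!Suc j) (T!j)" using tab_rel[OF T, of j] j s2 by simp
  ultimately show ?thesis unfolding Up_def by simp
qed

lemma mid_nb: "mid w j \<Longrightarrow> \<not> mid w (j-1) \<and> \<not> mid w (Suc j)"
  unfolding mid_def by auto

definition dl :: "int list list \<Rightarrow> nat \<Rightarrow> int" where
  "dl T j = sum_list (T!Suc j) - sum_list (T!j)"
definition wpairs :: "bool list \<Rightarrow> int list list \<Rightarrow> (bool \<times> int) list" where
  "wpairs w T = map (\<lambda>j. (w!j, dl T j)) [0..<length w]"

context
  fixes d L :: nat
  assumes d0: "d > 0" and L0: "L > 0"
begin

lemma st_tab: assumes T: "T \<in> tableaux d L w" shows "st d L w T \<in> tableaux d L (sw w)"
proof (rule tab_intro)
  let ?T = "st d L w T"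
  have lT: "length T = length w + 1" using tab_len[OF T] .
  show "length ?T = length (sw w) + 1" using lT by simp
  show "staircase d (?T!j)" if j: "j < length ?T" for j
  proof (cases "mid w j")
    case True
    have "?T!j \<in> Up d L (T!(j-1)) (T!Suc j)" using st_nth[of j T] j True loc_Up[OF d0 L0 mid_Low[OF T True]] by simp
    then show ?thesis unfolding Up_def using prec_stair by blast
  next
    case False then show ?thesis using st_nth[of j T] j tab_stair[OF T] by simp
  qed
  show "(if sw w!i then prec_dL d L (?T!i) (?T!Suc i) else prec_dL d L (?T!Suc i) (?T!i))"
    if i: "i < length (sw w)" for i
  proof -
    have i': "i < length w" using i by simp
    consider (A) "Suc i < length w \<and> \<not> w!i \<and> w!Suc i" | (B) "0 < i \<and> \<not> w!(i-1) \<and> w!i"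
      | (C) "\<not> (Suc i < length w \<and> \<not> w!i \<and> w!Suc i)" "\<not> (0 < i \<and> \<not> w!(i-1) \<and> w!i)" by blast
    then show ?thesis
    proof cases
      case A
      have m: "mid w (Suc i)" "\<not> mid w i" using A unfolding mid_def by auto
      have "?T!Suc i \<in> Up d L (T!i) (T!Suc (Suc i))"
        using st_nth[of "Suc i" T] lT i' m loc_Up[OF d0 L0 mid_Low[OF T m(1)]] by simp
      moreover have "?T!i = T!i" using st_nth[of i T] lT i' m by simp
      moreover have "sw w!i" using sw_nth[of i w] i' A by simp
      ultimately show ?thesis unfolding Up_def by simp
    next
      case B
      have m: "mid w i" "\<not> mid w (Suc i)" using B i' unfolding mid_def by auto
      have "?T!i \<in> Up d L (T!(i-1)) (T!Suc i)"
        using st_nth[of i T] lT i' m loc_Up[OF d0 L0 mid_Low[OF T m(1)]] by simp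
      moreover have "?T!Suc i = T!Suc i" using st_nth[of "Suc i" T] lT i' m by simp
      moreover have "\<not> sw w!i" using sw_nth[of i w] i' B by simp
      ultimately show ?thesis unfolding Up_def by simp
    next
      case C
      have m: "\<not> mid w i" "\<not> mid w (Suc i)" using C i' unfolding mid_def by auto
      have "?T!i = T!i" "?T!Suc i = T!Suc i" using st_nth[of i T] st_nth[of "Suc i" T] lT i' m by simp_all
      moreover have "sw w!i = w!i" using sw_nth[of i w] i' C by simp
      ultimately show ?thesis using tab_rel[OF T i'] by simp
    qed
  qed
qed

lemma ist_tab: assumes T: "T \<in> tableaux d L (sw w)" shows "ist d L w T \<in> tableaux d L w"
proof (rule tab_intro)
  let ?T = "ist d L w T"
  have lT: "length T = length w + 1" using tab_len[OF T] by simp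
  show "length ?T = length w + 1" using lT by simp
  show "staircase d (?T!j)" if j: "j < length ?T" for j
  proof (cases "mid w j")
    case True
    have "?T!j \<in> Low d L (T!(j-1)) (T!Suc j)" using ist_nth[of j T] j True iloc_Low[OF d0 L0 mid_Up[OF T True]] by simp
    then show ?thesis unfolding Low_def using prec_stair by blast
  next
    case False then show ?thesis using ist_nth[of j T] j tab_stair[OF T] by simp
  qed
  show "(if w!i then prec_dL d L (?T!i) (?T!Suc i) else prec_dL d L (?T!Suc i) (?T!i))"
    if i': "i < length w" for i
  proof -
    have i: "i < length (sw w)" using i' by simp
    consider (A) "Suc i < length w \<and> \<not> w!i \<and> w!Suc i" | (B) "0 < i \<and> \<not> w!(i-1) \<and> w!i"
      | (C) "\<not> (Suc i < length w \<and> \<not> w!i \<and> w!Suc i)" "\<not> (0 < i \<and> \<not> w!(i-1) \<and> w!i)" by blast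
    then show ?thesis
    proof cases
      case A
      have m: "mid w (Suc i)" "\<not> mid w i" using A unfolding mid_def by auto
      have "?T!Suc i \<in> Low d L (T!i) (T!Suc (Suc i))"
        using ist_nth[of "Suc i" T] lT i' m iloc_Low[OF d0 L0 mid_Up[OF T m(1)]] by simp
      moreover have "?T!i = T!i" using ist_nth[of i T] lT i' m by simp
      ultimately show ?thesis unfolding Low_def using A by simp
    next
      case B
      have m: "mid w i" "\<not> mid w (Suc i)" using B i' unfolding mid_def by auto
      have "?T!i \<in> Low d L (T!(i-1)) (T!Suc i)"
        using ist_nth[of i T] lT i' m iloc_Low[OF d0 L0 mid_Up[OF T m(1)]] by simp
      moreover have "?T!Suc i = T!Suc i" using ist_nth[of "Suc i" T] lT i' m by simp
      ultimately show ?thesis unfolding Low_def using B by simp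
    next
      case C
      have m: "\<not> mid w i" "\<not> mid w (Suc i)" using C i' unfolding mid_def by auto
      have "?T!i = T!i" "?T!Suc i = T!Suc i" using ist_nth[of i T] ist_nth[of "Suc i" T] lT i' m by simp_all
      moreover have "sw w!i = w!i" using sw_nth[of i w] i' C by simp
      ultimately show ?thesis using tab_rel[OF T i] by simp
    qed
  qed
qed

lemma ist_st: assumes T: "T \<in> tableaux d L w" shows "ist d L w (st d L w T) = T"
proof (rule nth_equalityI)
  show "length (ist d L w (st d L w T)) = length T" by simp
  fix j assume j: "j < length (ist d L w (st d L w T))"
  then have j': "j < length T" by simp
  have lT: "length T = length w + 1" using tab_len[OF T] .
  show "ist d L w (st d L w T) ! j = T ! j"
  proof (cases "mid w j")
    case True
    have nb: "\<not> mid w (j-1)" "\<not> mid w (Suc j)" using mid_nb[OF True] by auto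
    have jj: "j - 1 < length T" "Suc j < length T" using True lT unfolding mid_def by auto
    have "st d L w T ! (j-1) = T!(j-1)" "st d L w T ! Suc j = T!Suc j"
      using st_nth[OF jj(1)] st_nth[OF jj(2)] nb by auto
    then show ?thesis using ist_nth[of j] st_nth[OF j'] True j' iloc_loc[OF d0 L0 mid_Low[OF T True]] by simp
  next
    case False then show ?thesis using ist_nth[of j] st_nth[OF j'] j' by simp
  qed
qed

lemma st_ist: assumes T: "T \<in> tableaux d L (sw w)" shows "st d L w (ist d L w T) = T"
proof (rule nth_equalityI)
  show "length (st d L w (ist d L w T)) = length T" by simp
  fix j assume j: "j < length (st d L w (ist d L w T))"
  then have j': "j < length T" by simp
  have lT: "length T = length w + 1" using tab_len[OF T] by simp
  show "st d L w (ist d L w T) ! j = T ! j"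
  proof (cases "mid w j")
    case True
    have nb: "\<not> mid w (j-1)" "\<not> mid w (Suc j)" using mid_nb[OF True] by auto
    have jj: "j - 1 < length T" "Suc j < length T" using True lT unfolding mid_def by auto
    have "ist d L w T ! (j-1) = T!(j-1)" "ist d L w T ! Suc j = T!Suc j"
      using ist_nth[OF jj(1)] ist_nth[OF jj(2)] nb by auto
    then show ?thesis using st_nth[of j] ist_nth[OF j'] True j' loc_iloc[OF d0 L0 mid_Up[OF T True]] by simp
  next
    case False then show ?thesis using st_nth[of j] ist_nth[OF j'] j' by simp
  qed
qed

lemma st_bij: "bij_betw (st d L w) (tableaux d L w) (tableaux d L (sw w))"
  by (rule bij_betw_byWitness[where f'="ist d L w"]) (auto simp: ist_st st_ist st_tab ist_tab)

lemma st_hd: assumes T: "T \<in> tableaux d L w" shows "hd (st d L w T) = hd T"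
proof -
  have "length T > 0" using tab_len[OF T] by simp
  moreover then have "st d L w T \<noteq> []" by (metis st_len length_greater_0_conv)
  ultimately show ?thesis using st_nth[of 0 T] by (simp add: hd_conv_nth mid_def)
qed

lemma st_last: assumes T: "T \<in> tableaux d L w" shows "last (st d L w T) = last T"
proof -
  have l: "length T = length w + 1" using tab_len[OF T] .
  have "T \<noteq> []" using l by auto
  moreover then have "st d L w T \<noteq> []" by (metis st_len length_greater_0_conv)
  ultimately show ?thesis using st_nth[of "length w" T] l by (simp add: last_conv_nth mid_def)
qed

lemma wpairs_st: assumes T: "T \<in> tableaux d L w"
  shows "wpairs (sw w) (st d L w T) = psw fst (wpairs w T)"
proof (rule nth_equalityI)
  show "length (wpairs (sw w) (st d L w T)) = length (psw fst (wpairs w T))" by (simp add: wpairs_def)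
  fix j assume "j < length (wpairs (sw w) (st d L w T))"
  then have j: "j < length w" by (simp add: wpairs_def)
  have lT: "length T = length w + 1" using tab_len[OF T] .
  let ?T = "st d L w T"
  have R: "psw fst (wpairs w T) ! j =
    (if Suc j < length w \<and> \<not> w!j \<and> w!Suc j then (w!Suc j, dl T (Suc j))
     else if 0 < j \<and> \<not> w!(j-1) \<and> w!j then (w!(j-1), dl T (j-1)) else (w!j, dl T j))"
    using psw_nth[of j "wpairs w T" fst] j by (auto simp: wpairs_def nth_Cons')
  have Lft: "wpairs (sw w) ?T ! j = (sw w ! j, dl ?T j)" using j by (simp add: wpairs_def)
  consider (A) "Suc j < length w \<and> \<not> w!j \<and> w!Suc j" | (B) "0 < j \<and> \<not> w!(j-1) \<and> w!j"
      | (C) "\<not> (Suc j < length w \<and> \<not> w!j \<and> w!Suc j)" "\<not> (0 < j \<and> \<not> w!(j-1) \<and> w!j)" by blast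
  then show "wpairs (sw w) ?T ! j = psw fst (wpairs w T) ! j"
  proof cases
    case A
    have m: "mid w (Suc j)" "\<not> mid w j" using A unfolding mid_def by auto
    have "?T!Suc j = loc d L (T!j) (T!Suc (Suc j)) (T!Suc j)" using st_nth[of "Suc j" T] lT j m by simp
    then have "sum_list (?T!Suc j) = sum_list (T!j) + sum_list (T!Suc (Suc j)) - sum_list (T!Suc j)"
      using loc_sum[OF d0 L0 mid_Low[OF T m(1)]] by simp
    moreover have "?T!j = T!j" using st_nth[of j T] lT j m by simp
    moreover have "sw w!j" using sw_nth[of j w] j A by simp
    ultimately show ?thesis using Lft R A by (simp add: dl_def)
  next
    case B
    have m: "mid w j" "\<not> mid w (Suc j)" using B j unfolding mid_def by auto
    have "?T!j = loc d L (T!(j-1)) (T!Suc j) (T!j)" using st_nth[of j T] lT j m by simp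
    then have "sum_list (?T!j) = sum_list (T!(j-1)) + sum_list (T!Suc j) - sum_list (T!j)"
      using loc_sum[OF d0 L0 mid_Low[OF T m(1)]] by simp
    moreover have "?T!Suc j = T!Suc j" using st_nth[of "Suc j" T] lT j m by simp
    moreover have "\<not> sw w!j" using sw_nth[of j w] j B by simp
    moreover have "Suc (j-1) = j" using B by simp
    ultimately show ?thesis using Lft R B by (simp add: dl_def)
  next
    case C
    have m: "\<not> mid w j" "\<not> mid w (Suc j)" using C j unfolding mid_def by auto
    have "?T!j = T!j" "?T!Suc j = T!Suc j" using st_nth[of j T] st_nth[of "Suc j" T] lT j m by simp_all
    moreover have "sw w!j = w!j" using sw_nth[of j w] j C by simp
    ultimately show ?thesis using Lft R C by (simp add: dl_def)
  qed
qed

end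

lemma concat_if: "concat (map (\<lambda>j. if P j then [f j] else []) xs) = map f (filter P xs)"
  by (induction xs) auto

lemma wtp: "wt_plus w T = map snd (filter fst (wpairs w T))"
  unfolding wt_plus_def wpairs_def dl_def by (simp add: concat_if filter_map comp_def)
lemma wtm: "wt_minus w T = rev (map (\<lambda>p. - snd p) (filter (\<lambda>p. \<not> fst p) (wpairs w T)))"
  unfolding wt_minus_def wpairs_def dl_def by (simp add: concat_if filter_map comp_def)



lemma star_len[simp]: "length (word_star w) = length w" by (simp add: word_star_def)
lemma star_nth: "j < length w \<Longrightarrow> word_star w ! j = (\<not> w!(length w - Suc j))"
  by (simp add: word_star_def rev_nth)

lemma sw_star: "sw (word_star w) = word_star (sw w)"
proof (rule nth_equalityI)
  show "length (sw (word_star w)) = length (word_star (sw w))" by simp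
  fix j assume "j < length (sw (word_star w))"
  then have j: "j < length w" by simp
  define n where "n = length w"
  define i where "i = n - Suc j"
  have i: "i < n" "j = n - Suc i" using j unfolding i_def n_def by auto
  have L: "sw (word_star w) ! j =
    (if Suc j < n \<and> w!i \<and> \<not> w!(i-1) then True
     else if 0 < j \<and> w!(Suc i) \<and> \<not> w!i then False else \<not> w!i)"
  proof -
    have f1: "n - Suc (Suc j) = i - 1" unfolding i_def by arith
    have f2: "0 < j \<Longrightarrow> n - Suc (j - 1) = Suc i" unfolding i_def using j n_def by arith
    have a: "Suc j < n \<Longrightarrow> word_star w ! Suc j = (\<not> w!(i-1))"
      using star_nth[of "Suc j" w] f1 unfolding n_def by simp
    have b: "0 < j \<Longrightarrow> word_star w ! (j-1) = (\<not> w!(Suc i))"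
      using star_nth[of "j-1" w] j f2 unfolding n_def by simp
    have c: "word_star w ! j = (\<not> w!i)" using star_nth[OF j] unfolding n_def i_def by simp
    show ?thesis using sw_nth[of j "word_star w"] j a b c unfolding n_def by auto
  qed
  have R: "word_star (sw w) ! j = (\<not> sw w ! i)"
    using star_nth[of j "sw w"] j unfolding i_def n_def by simp
  have e1: "Suc j < n \<longleftrightarrow> 0 < i" and e2: "0 < j \<longleftrightarrow> Suc i < n" using i j unfolding n_def by auto
  show "sw (word_star w) ! j = word_star (sw w) ! j"
    unfolding L R using sw_nth[of i w] i e1 e2 unfolding n_def by auto
qed

lemma rev_tab: assumes T: "T \<in> tableaux d L w" shows "rev T \<in> tableaux d L (word_star w)"
proof (rule tab_intro)
  have lT: "length T = length w + 1" using tab_len[OF T] .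
  show "length (rev T) = length (word_star w) + 1" using lT by simp
  show "staircase d (rev T ! j)" if "j < length (rev T)" for j
    using tab_stair[OF T] that by (simp add: rev_nth)
  show "(if word_star w ! i then prec_dL d L (rev T ! i) (rev T ! Suc i) else prec_dL d L (rev T ! Suc i) (rev T ! i))"
    if i: "i < length (word_star w)" for i
  proof -
    define k where "k = length w - Suc i"
    have k: "k < length w" using i unfolding k_def by simp
    have e: "rev T ! i = T ! Suc k" "rev T ! Suc i = T ! k" "word_star w ! i = (\<not> w!k)"
      using i lT star_nth[of i w] unfolding k_def by (auto simp: rev_nth Suc_diff_Suc)
    show ?thesis using tab_rel[OF T k] unfolding e by auto
  qed
qed

lemma st_rev: assumes lT: "length T = length w + 1"
  shows "st d L (word_star w) (rev T) = rev (st d L w T)"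
proof (rule nth_equalityI)
  show "length (st d L (word_star w) (rev T)) = length (rev (st d L w T))" by simp
  fix j assume "j < length (st d L (word_star w) (rev T))"
  then have j: "j \<le> length w" using lT by simp
  define n where "n = length w"
  define i where "i = n - j"
  have rT: "k \<le> n \<Longrightarrow> rev T ! k = T ! (n - k)" for k using lT unfolding n_def by (simp add: rev_nth)
  have f1: "0 < j \<Longrightarrow> n - Suc (j - 1) = i" unfolding i_def by arith
  have f2: "n - Suc j = i - 1" unfolding i_def by arith
  have f3: "(0 < j \<and> j < n) \<longleftrightarrow> (0 < i \<and> i < n)" unfolding i_def using j n_def by arith
  have m1: "mid (word_star w) j \<longleftrightarrow> (0 < j \<and> j < n \<and> w!i \<and> \<not> w!(i-1))"
  proof (cases "0 < j \<and> j < n")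
    case True
    have nw: "length w = n" by (simp add: n_def)
    have s1: "word_star w ! (j-1) = (\<not> w!i)"
    proof -
      have "word_star w ! (j-1) = (\<not> w!(length w - Suc (j-1)))" using star_nth[of "j-1" w] True nw by (simp add: less_imp_diff_less)
      then show ?thesis using f1 True nw by simp
    qed
    have s2: "word_star w ! j = (\<not> w!(i-1))"
    proof -
      have "word_star w ! j = (\<not> w!(length w - Suc j))" using star_nth[of j w] True nw by simp
      then show ?thesis using f2 nw by simp
    qed
    note s1 s2
    then show ?thesis unfolding mid_def n_def using True n_def by simp
  next
    case False then show ?thesis unfolding mid_def n_def by auto
  qed
  have m: "mid (word_star w) j \<longleftrightarrow> mid w i"
    unfolding m1 using f3 unfolding mid_def n_def by auto
  have R: "rev (st d L w T) ! j = st d L w T ! i"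
    using lT j unfolding i_def n_def by (simp add: rev_nth)
  show "st d L (word_star w) (rev T) ! j = rev (st d L w T) ! j"
  proof (cases "mid w i")
    case True
    then have ij: "0 < j" "j < n" "0 < i" using m unfolding mid_def n_def by auto
    have "rev T ! (j-1) = T ! Suc i" "rev T ! Suc j = T ! (i-1)" "rev T ! j = T ! i"
      using rT[of "j-1"] rT[of "Suc j"] rT[of j] ij j unfolding i_def n_def by (auto simp: Suc_diff_le)
    then show ?thesis using st_nth[of j "rev T"] st_nth[of i T] R True m lT j ij loc_sym unfolding i_def n_def by auto
  next
    case False
    then show ?thesis using st_nth[of j "rev T"] st_nth[of i T] R m lT j rT[of j] unfolding i_def n_def by auto
  qed
qed

fun Wk :: "nat \<Rightarrow> bool list \<Rightarrow> bool list" where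
  "Wk 0 w = w" | "Wk (Suc k) w = Wk k (sw w)"
fun Phi :: "nat \<Rightarrow> nat \<Rightarrow> nat \<Rightarrow> bool list \<Rightarrow> int list list \<Rightarrow> int list list" where
  "Phi d L 0 w T = T" | "Phi d L (Suc k) w T = Phi d L k (sw w) (st d L w T)"

lemma Wk_len[simp]: "length (Wk k w) = length w" by (induction k arbitrary: w) auto
lemma Wk_count: "count_list (Wk k w) a = count_list w a" by (induction k arbitrary: w) (auto simp: sw_count)
lemma Wk_Suc2: "Wk (Suc k) w = sw (Wk k w)" by (induction k arbitrary: w) auto
lemma Wk_star: "Wk k (word_star w) = word_star (Wk k w)" by (induction k arbitrary: w) (auto simp: sw_star)

lemma Phi_rev: "length T = length w + 1 \<Longrightarrow> Phi d L k (word_star w) (rev T) = rev (Phi d L k w T)"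
proof (induction k arbitrary: w T)
  case 0 then show ?case by simp
next
  case (Suc k)
  have "Phi d L (Suc k) (word_star w) (rev T) = Phi d L k (word_star (sw w)) (rev (st d L w T))"
    using st_rev[OF Suc.prems] by (simp add: sw_star)
  also have "\<dots> = rev (Phi d L k (sw w) (st d L w T))" using Suc.IH Suc.prems by simp
  finally show ?case by simp
qed

context
  fixes d L :: nat
  assumes d0: "d > 0" and L0: "L > 0"
begin

lemma Phi_bij: "bij_betw (Phi d L k w) (tableaux d L w) (tableaux d L (Wk k w))"
proof (induction k arbitrary: w)
  case 0 then show ?case by (simp add: bij_betw_def inj_on_def)
next
  case (Suc k)
  have eq: "Phi d L (Suc k) w = Phi d L k (sw w) \<circ> st d L w" by (rule ext) simp
  have b: "bij_betw (Phi d L k (sw w) \<circ> st d L w) (tableaux d L w) (tableaux d L (Wk (Suc k) w))"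
    using bij_betw_trans[OF st_bij[OF d0 L0] Suc.IH[of "sw w"]] by simp
  show ?case unfolding eq by (rule b)
qed

lemma Phi_props: "T \<in> tableaux d L w \<Longrightarrow> hd (Phi d L k w T) = hd T \<and> last (Phi d L k w T) = last T \<and>
   wt_plus (Wk k w) (Phi d L k w T) = wt_plus w T \<and> wt_minus (Wk k w) (Phi d L k w T) = wt_minus w T"
proof (induction k arbitrary: w T)
  case 0 then show ?case by simp
next
  case (Suc k)
  have T': "st d L w T \<in> tableaux d L (sw w)" using st_tab[OF d0 L0 Suc.prems] .
  have "wt_plus (sw w) (st d L w T) = wt_plus w T" "wt_minus (sw w) (st d L w T) = wt_minus w T"
    unfolding wtp wtm wpairs_st[OF d0 L0 Suc.prems] by (simp_all only: psw_filter psw_filter_not)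
  then show ?case using Suc.IH[OF T'] st_hd[OF d0 L0 Suc.prems] st_last[OF d0 L0 Suc.prems] by simp
qed

end

fun pot :: "bool list \<Rightarrow> nat" where
  "pot [] = 0" | "pot (x # xs) = pot xs + count_list xs True"

lemma count_le: "count_list xs a \<le> length xs" by (induction xs) auto

lemma pot_bound: "pot w \<le> length w * length w"
proof (induction w)
  case Nil then show ?case by simp
next
  case (Cons x xs)
  then show ?case using count_le[of xs True] by simp
qed

lemma pot_psw: "P = (\<lambda>b. b) \<Longrightarrow> pot (psw P w) + (if psw P w = w then 0 else 1) \<le> pot w"
proof (induction P w rule: psw.induct)
  case (1 P x y r)
  show ?case
  proof (cases "\<not> P x \<and> P y")
    case True
    then have xy: "x = False" "y = True" using "1.prems" by auto
    have "pot (psw P r) \<le> pot r" using "1.IH"(1)[OF True "1.prems"] by (auto split: if_splits)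
    then show ?thesis using xy "1.prems" psw_count[of P r True] by simp
  next
    case False
    have "pot (psw P (y # r)) + (if psw P (y # r) = y # r then 0 else 1) \<le> pot (y # r)"
      using "1.IH"(2)[OF False "1.prems"] .
    then show ?thesis using False psw_count[of P "y # r" True] by (auto split: if_splits)
  qed
qed auto

lemma noinc: "(\<forall>j. Suc j < length w \<longrightarrow> \<not> (\<not> w!j \<and> w!Suc j)) \<Longrightarrow>
  w = replicate (count_list w True) True @ replicate (count_list w False) False"
proof (induction w)
  case Nil then show ?case by simp
next
  case (Cons x xs)
  have h: "\<forall>j. Suc j < length xs \<longrightarrow> \<not> (\<not> xs!j \<and> xs!Suc j)"
  proof (intro allI impI)
    fix j assume "Suc j < length xs"
    then show "\<not> (\<not> xs!j \<and> xs!Suc j)" using Cons.prems[rule_format, of "Suc j"] by simp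
  qed
  have IH: "xs = replicate (count_list xs True) True @ replicate (count_list xs False) False" using Cons.IH[OF h] .
  show ?case
  proof (cases x)
    case True then show ?thesis using IH by simp
  next
    case False
    have "count_list xs True = 0"
    proof (rule ccontr)
      assume "count_list xs True \<noteq> 0"
      then obtain c where c: "count_list xs True = Suc c" by (cases "count_list xs True") auto
      then have "xs ! 0 = True" "xs \<noteq> []" using IH by (metis append_Cons replicate_Suc nth_Cons_0 list.distinct(1))+
      then show False using Cons.prems[rule_format, of 0] False by simp
    qed
    then show ?thesis using IH False by simp
  qed
qed

lemma fix_canon: "sw w = w \<Longrightarrow> w = replicate (count_list w True) True @ replicate (count_list w False) False"
proof (rule noinc, intro allI impI)
  fix j assume s: "sw w = w" and j: "Suc j < length w"
  show "\<not> (\<not> w!j \<and> w!Suc j)"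
  proof
    assume a: "\<not> w!j \<and> w!Suc j"
    then have "sw w ! j = True" using sw_nth[of j w] j by simp
    then show False using s a by simp
  qed
qed

lemma conv: "pot (Wk k w) + k \<le> pot w \<or> sw (Wk k w) = Wk k w"
proof (induction k)
  case 0 then show ?case by simp
next
  case (Suc k)
  show ?case
  proof (cases "sw (Wk k w) = Wk k w")
    case True then show ?thesis by (simp del: Wk.simps add: Wk_Suc2)
  next
    case False
    have "pot (sw (Wk k w)) + 1 \<le> pot (Wk k w)"
      using pot_psw[of "\<lambda>b. b" "Wk k w"] False unfolding sw_def by simp
    then show ?thesis using Suc False by (simp del: Wk.simps add: Wk_Suc2)
  qed
qed

definition NN :: "bool list \<Rightarrow> nat" where "NN w = Suc (length w * length w)"

lemma Wk_NN: "Wk (NN w) w = replicate (count_list w True) True @ replicate (count_list w False) False"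
proof -
  have "sw (Wk (NN w) w) = Wk (NN w) w" using conv[of "NN w" w] pot_bound[of w] unfolding NN_def by auto
  then show ?thesis using fix_canon Wk_count by metis
qed

lemma len_count: "length (w::bool list) = count_list w True + count_list w False"
  by (induction w) auto



theorem theorem8p9:
  fixes d L :: nat
  assumes "d > 0" and "L > 0"
  shows "\<exists>Psi :: bool list \<Rightarrow> bool list \<Rightarrow> int list list \<Rightarrow> int list list.
    \<forall>w v. count_list w True = count_list v True \<and> count_list w False = count_list v False \<longrightarrow>
      bij_betw (Psi w v) (tableaux d L w) (tableaux d L v) \<and>
      (\<forall>T\<in>tableaux d L w.
          hd (Psi w v T) = hd T \<and> last (Psi w v T) = last T \<and>
          wt_plus v (Psi w v T) = wt_plus w T \<and> wt_minus v (Psi w v T) = wt_minus w T \<and>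
          Psi (word_star w) (word_star v) (rev T) = rev (Psi w v T))"
proof -
  note d0 = assms(1) and L0 = assms(2)
  define Psi where "Psi w v T = inv_into (tableaux d L v) (Phi d L (NN v) v) (Phi d L (NN w) w T)" for w v T
  show ?thesis
  proof (intro exI[of _ Psi] allI impI conjI)
    fix w v :: "bool list"
    assume c: "count_list w True = count_list v True \<and> count_list w False = count_list v False"
    have lwv: "length w = length v" using c len_count[of w] len_count[of v] by simp
    define N where "N = NN w"
    have Nv: "NN v = N" unfolding N_def NN_def using lwv by simp
    have Ns: "NN (word_star w) = N" "NN (word_star v) = N" unfolding N_def NN_def using lwv by simp_all
    define C where "C = Wk N w"
    have Cv: "Wk N v = C"
    proof -
      have "Wk N v = Wk (NN v) v" using Nv by simp
      also have "\<dots> = replicate (count_list v True) True @ replicate (count_list v False) False" by (rule Wk_NN)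
      also have "\<dots> = Wk (NN w) w" using Wk_NN[of w] c by simp
      finally show ?thesis unfolding C_def N_def .
    qed
    have bw: "bij_betw (Phi d L N w) (tableaux d L w) (tableaux d L C)" using Phi_bij[OF d0 L0] unfolding C_def by blast
    have bv: "bij_betw (Phi d L N v) (tableaux d L v) (tableaux d L C)" using Phi_bij[OF d0 L0, of N v] Cv by simp
    have PsiE: "Psi w v T = inv_into (tableaux d L v) (Phi d L N v) (Phi d L N w T)" for T
      unfolding Psi_def Nv N_def by simp
    have "bij_betw (inv_into (tableaux d L v) (Phi d L N v) \<circ> Phi d L N w) (tableaux d L w) (tableaux d L v)"
      using bij_betw_trans[OF bw bij_betw_inv_into[OF bv]] .
    moreover have "Psi w v = inv_into (tableaux d L v) (Phi d L N v) \<circ> Phi d L N w"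
      using PsiE by (intro ext) simp
    ultimately show "bij_betw (Psi w v) (tableaux d L w) (tableaux d L v)" by simp
    show "\<forall>T\<in>tableaux d L w.
          hd (Psi w v T) = hd T \<and> last (Psi w v T) = last T \<and>
          wt_plus v (Psi w v T) = wt_plus w T \<and> wt_minus v (Psi w v T) = wt_minus w T \<and>
          Psi (word_star w) (word_star v) (rev T) = rev (Psi w v T)"
    proof
      fix T assume T: "T \<in> tableaux d L w"
      define y where "y = Phi d L N w T"
      have y: "y \<in> tableaux d L C" using bw T bij_betwE unfolding y_def by blast
      define x where "x = Psi w v T"
      have x: "x \<in> tableaux d L v" "Phi d L N v x = y"
        using bij_betw_inv_into_right[OF bv y] bij_betwE[OF bij_betw_inv_into[OF bv]] y
        unfolding x_def PsiE y_def by auto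
      have pT: "hd y = hd T \<and> last y = last T \<and> wt_plus C y = wt_plus w T \<and> wt_minus C y = wt_minus w T"
        using Phi_props[OF d0 L0 T, of N] unfolding y_def C_def by blast
      have px: "hd y = hd x \<and> last y = last x \<and> wt_plus C y = wt_plus v x \<and> wt_minus C y = wt_minus v x"
        using Phi_props[OF d0 L0 x(1), of N] x(2) Cv by simp
      have lT: "length T = length w + 1" using tab_len[OF T] .
      have lx: "length x = length v + 1" using tab_len[OF x(1)] .
      have bvs: "bij_betw (Phi d L N (word_star v)) (tableaux d L (word_star v)) (tableaux d L (Wk N (word_star v)))"
        using Phi_bij[OF d0 L0] by blast
      have rx: "rev x \<in> tableaux d L (word_star v)" using rev_tab[OF x(1)] .
      have "Psi (word_star w) (word_star v) (rev T)
          = inv_into (tableaux d L (word_star v)) (Phi d L N (word_star v)) (Phi d L N (word_star w) (rev T))"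
        unfolding Psi_def Ns by simp
      also have "Phi d L N (word_star w) (rev T) = rev y" using Phi_rev[OF lT] unfolding y_def by simp
      also have "rev y = Phi d L N (word_star v) (rev x)" using Phi_rev[OF lx] x(2) by simp
      also have "inv_into (tableaux d L (word_star v)) (Phi d L N (word_star v)) (Phi d L N (word_star v) (rev x)) = rev x"
        using bij_betw_inv_into_left[OF bvs rx] .
      finally have "Psi (word_star w) (word_star v) (rev T) = rev x" .
      then show "hd (Psi w v T) = hd T \<and> last (Psi w v T) = last T \<and>
          wt_plus v (Psi w v T) = wt_plus w T \<and> wt_minus v (Psi w v T) = wt_minus w T \<and>
          Psi (word_star w) (word_star v) (rev T) = rev (Psi w v T)"
        using pT px unfolding x_def by simp
    qed
  qed
qed

end
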